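(* Let $n\geq3$ and $\lambda=(\lambda_1,\dots,\lambda_n)\in\mathbb{R}^n$ with $\lambda_1+\dots+\lambda_n>0$ and $N(\lambda)=n$. Then \[\sum_{P\in\mathcal{P}^0_{ord}(\lambda)}(-1)^{|P|}\varepsilon(P)\varepsilon'(P)=0.\]
   Context: $s_J(\lambda)=\sum_{i\in J}\lambda_i$ for $J\subset\{1,\dots,n\}$. $\delta(\lambda)$ is the minimum of $s_J(\lambda)/|J|$ over subsets $J$ with $s_J(\lambda)>0$; when $\delta(\lambda)>0$, $N(\lambda)$ is the minimum of $|J|$ over subsets $J$ with $s_J(\lambda)/|J|=\delta(\lambda)$. Ordered partitions $P=(I_1,\dots,I_k)$ of $\{1,\dots,n\}$ into nonempty blocks, $|P|=k$. $\mathcal{P}_{ord}(\lambda)$: those with $s_{I_1}(\lambda)+\dots+s_{I_i}(\lambda)>0$ for all $i$. $\mathcal{P}^0_{ord}(\lambda)$: those in $\mathcal{P}_{ord}(\lambda)$ having at most one block of odd cardinality. $\varepsilon(P)=\mathrm{sgn}(\sigma_P)$, where $\sigma_P$ is the unique permutation with $\sigma_P^{-1}$ mapping $\{n_1+\dots+n_i+1,\dots,n_1+\dots+n_{i+1}\}$ increasingly onto $I_{i+1}$ ($n_i=|I_i|$); $\varepsilon'(P)=(-1)^{\frac12\sum_i|I_i|(|I_i|-1)}$. *)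

theory Defs
  imports Complex_Main "HOL-Combinatorics.Permutations"
begin

text \<open>Vectors lambda in R^n are functions nat => real, only the values on {1..n} matter.\<close>

definition sJ :: "(nat \<Rightarrow> real) \<Rightarrow> nat set \<Rightarrow> real" where
  "sJ lam J = (\<Sum>i\<in>J. lam i)"

definition delta :: "nat \<Rightarrow> (nat \<Rightarrow> real) \<Rightarrow> real" where
  "delta n lam = Min {sJ lam J / real (card J) | J. J \<subseteq> {1..n} \<and> sJ lam J > 0}"

definition Nlam :: "nat \<Rightarrow> (nat \<Rightarrow> real) \<Rightarrow> nat" where
  "Nlam n lam = Min {card J | J. J \<subseteq> {1..n} \<and> sJ lam J > 0
                      \<and> sJ lam J / real (card J) = delta n lam}"

definition ordered_partitions :: "nat \<Rightarrow> nat set list set" where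
  "ordered_partitions n = {P. (\<forall>B\<in>set P. B \<noteq> {}) \<and>
      (\<forall>i<length P. \<forall>j<length P. i \<noteq> j \<longrightarrow> P ! i \<inter> P ! j = {}) \<and>
      \<Union>(set P) = {1..n}}"

definition P_ord :: "nat \<Rightarrow> (nat \<Rightarrow> real) \<Rightarrow> nat set list set" where
  "P_ord n lam = {P \<in> ordered_partitions n. \<forall>i<length P. (\<Sum>j\<le>i. sJ lam (P ! j)) > 0}"

definition P0_ord :: "nat \<Rightarrow> (nat \<Rightarrow> real) \<Rightarrow> nat set list set" where
  "P0_ord n lam = {P \<in> P_ord n lam. card {i. i < length P \<and> odd (card (P ! i))} \<le> 1}"

definition sigma_inv :: "nat set list \<Rightarrow> nat \<Rightarrow> nat" where
  "sigma_inv P = (let L = concat (map sorted_list_of_set P) in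
      (\<lambda>k. if k \<in> {1..length L} then L ! (k - 1) else k))"

definition sigma :: "nat set list \<Rightarrow> nat \<Rightarrow> nat" where
  "sigma P = inv (sigma_inv P)"

definition eps :: "nat set list \<Rightarrow> int" where
  "eps P = sign (sigma P)"

definition eps' :: "nat set list \<Rightarrow> int" where
  "eps' P = (-1) ^ ((\<Sum>i<length P. card (P ! i) * (card (P ! i) - 1)) div 2)"

end

theory Submission
  imports Defs
begin


fun invc :: "nat list \<Rightarrow> nat" where
  "invc [] = 0"
| "invc (x # xs) = length (filter (\<lambda>y. y < x) xs) + invc xs"

fun crossc :: "nat list \<Rightarrow> nat list \<Rightarrow> nat" where
  "crossc [] ys = 0"
| "crossc (x # xs) ys = length (filter (\<lambda>y. y < x) ys) + crossc xs ys"

lemma invc_append: "invc (xs @ ys) = invc xs + invc ys + crossc xs ys"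
  by (induction xs) auto

lemma crossc_append1: "crossc (xs @ ys) zs = crossc xs zs + crossc ys zs"
  by (induction xs) auto

lemma crossc_append2: "crossc xs (ys @ zs) = crossc xs ys + crossc xs zs"
  by (induction xs) auto

lemma crossc_Cons2: "crossc ys (x # xs) = length (filter (\<lambda>y. x < y) ys) + crossc ys xs"
  by (induction ys) auto

lemma filter_lt_gt: "(x::nat) \<notin> set ys \<Longrightarrow>
  length (filter (\<lambda>y. y < x) ys) + length (filter (\<lambda>y. x < y) ys) = length ys"
proof (induction ys)
  case (Cons a ys)
  then show ?case by (cases "a < x") (auto simp: linorder_neq_iff)
qed simp

lemma crossc_sym: "distinct (xs @ ys) \<Longrightarrow> crossc xs ys + crossc ys xs = length xs * length ys"
proof (induction xs)
  case Nil
  then show ?case by (induction ys) auto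
next
  case (Cons x xs)
  then have "x \<notin> set ys" by auto
  from filter_lt_gt[OF this] Cons show ?case
    by (simp add: crossc_Cons2)
qed

lemma seg_swap: "invc (X @ A @ B @ Y) + crossc B A = invc (X @ B @ A @ Y) + crossc A B"
  by (simp add: invc_append crossc_append1 crossc_append2)

lemma seg_swap_sign:
  assumes "distinct (A @ B)"
  shows "((-1::int) ^ invc (X @ B @ A @ Y)) = (-1) ^ (length A * length B) * (-1) ^ invc (X @ A @ B @ Y)"
proof -
  have e: "invc (X @ A @ B @ Y) + crossc B A = invc (X @ B @ A @ Y) + crossc A B"
    by (rule seg_swap)
  have s: "crossc A B + crossc B A = length A * length B" using crossc_sym[OF assms] .
  have "(-1::int) ^ invc (X @ B @ A @ Y) * (-1) ^ crossc A B * (-1) ^ crossc A B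
      = (-1) ^ invc (X @ A @ B @ Y) * (-1) ^ crossc B A * (-1) ^ crossc A B"
    using e by (metis power_add)
  then have "(-1::int) ^ invc (X @ B @ A @ Y)
      = (-1) ^ invc (X @ A @ B @ Y) * (-1) ^ (crossc A B + crossc B A)"
    by (simp add: power_add mult.assoc flip: power_mult_distrib)
  then show ?thesis using s by simp
qed

definition perm_of :: "nat list \<Rightarrow> nat \<Rightarrow> nat" where
  "perm_of L = (\<lambda>k. if k \<in> {1..length L} then L ! (k - 1) else k)"

lemma perm_of_permutes:
  assumes "distinct L" "set L = {1..length L}"
  shows "perm_of L permutes {1..length L}"
proof (rule bij_imp_permutes)
  show "bij_betw (perm_of L) {1..length L} {1..length L}"
  proof (rule bij_betw_imageI)
    show "inj_on (perm_of L) {1..length L}"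
      using assms(1) by (auto simp: inj_on_def perm_of_def nth_eq_iff_index_eq)
    have "perm_of L ` {1..length L} = set L"
    proof
      show "perm_of L ` {1..length L} \<subseteq> set L" by (auto simp: perm_of_def)
      show "set L \<subseteq> perm_of L ` {1..length L}"
      proof
        fix y assume "y \<in> set L"
        then obtain i where "i < length L" "L ! i = y" by (auto simp: in_set_conv_nth)
        then show "y \<in> perm_of L ` {1..length L}"
          by (auto simp: perm_of_def image_iff intro!: bexI[of _ "Suc i"])
      qed
    qed
    then show "perm_of L ` {1..length L} = {1..length L}" using assms(2) by simp
  qed
  show "perm_of L x = x" if "x \<notin> {1..length L}" for x
    using that unfolding perm_of_def by (rule if_not_P)
qed

lemma invc_sorted: "sorted L \<Longrightarrow> distinct L \<Longrightarrow> invc L = 0"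
proof (induction L)
  case (Cons x xs)
  then have "filter (\<lambda>y. y < x) xs = []" by (auto simp: filter_empty_conv)
  with Cons show ?case by simp
qed simp

lemma sign_perm_of:
  "distinct L \<Longrightarrow> set L = {1..length L} \<Longrightarrow> sign (perm_of L) = (-1) ^ invc L"
proof (induction "invc L" arbitrary: L rule: less_induct)
  case less
  show ?case
  proof (cases "\<exists>i. Suc i < length L \<and> L ! (Suc i) < L ! i")
    case True
    then obtain i where i: "Suc i < length L" "L ! (Suc i) < L ! i" by blast
    define L' where "L' = L[i := L ! Suc i, Suc i := L ! i]"
    define X where "X = take i L"
    define Y where "Y = drop (Suc (Suc i)) L"
    define a where "a = L ! i"
    define b where "b = L ! Suc i"
    have dec: "L = X @ [a] @ [b] @ Y"
      unfolding X_def Y_def a_def b_def using i(1) by (simp add: Cons_nth_drop_Suc)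
    have dec': "L' = X @ [b] @ [a] @ Y"
      unfolding X_def Y_def L'_def a_def b_def using i(1)
      by (simp add: upd_conv_take_nth_drop)
    have "invc (X @ [a] @ [b] @ Y) + crossc [b] [a] = invc (X @ [b] @ [a] @ Y) + crossc [a] [b]"
      by (rule seg_swap)
    moreover have "b < a" using i(2) by (simp add: a_def b_def)
    ultimately have inv: "invc L = Suc (invc L')" by (simp add: dec dec')
    have len: "length L' = length L" by (simp add: L'_def)
    have "set L' = set L" unfolding dec' by (subst dec) auto
    moreover have "distinct L' = distinct L" unfolding dec' by (subst dec) auto
    ultimately have dist': "distinct L'" "set L' = {1..length L'}"
      using less.prems len by auto
    have IH: "sign (perm_of L') = (-1) ^ invc L'"
      using less.hyps[of L'] inv dist' by simp
    have eq: "perm_of L = perm_of L' \<circ> Transposition.transpose (Suc i) (Suc (Suc i))"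
    proof
      fix k
      show "perm_of L k = (perm_of L' \<circ> Transposition.transpose (Suc i) (Suc (Suc i))) k"
      proof (cases "k = Suc i \<or> k = Suc (Suc i)")
        case True
        then show ?thesis using i(1) by (auto simp: perm_of_def L'_def nth_list_update)
      next
        case False
        then have "Transposition.transpose (Suc i) (Suc (Suc i)) k = k" by simp
        moreover have "k - 1 \<noteq> i" "k - 1 \<noteq> Suc i" if "k \<ge> 1" using False that by auto
        ultimately show ?thesis
          by (auto simp: perm_of_def L'_def len nth_list_update_neq[symmetric])
      qed
    qed
    have pL': "permutation (perm_of L')"
      using perm_of_permutes[OF dist'] permutation_permutes by blast
    have "sign (perm_of L) = sign (perm_of L') * sign (Transposition.transpose (Suc i) (Suc (Suc i)))"
      unfolding eq by (rule sign_compose[OF pL' permutation_swap_id])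
    also have "\<dots> = (-1) ^ invc L" using IH inv by (simp add: sign_swap_id)
    finally show ?thesis .
  next
    case False
    then have "sorted L" unfolding sorted_iff_nth_Suc by (meson not_less)
    have "L = [1..<Suc (length L)]"
      using sorted_distinct_set_unique[of L "[1..<Suc (length L)]"] \<open>sorted L\<close> less.prems
      by (simp del: upt_Suc add: atLeastLessThanSuc_atLeastAtMost)
    have "perm_of L = id"
    proof
      fix k
      show "perm_of L k = id k"
      proof (cases "k \<in> {1..length L}")
        case True
        then have "L ! (k - 1) = k"
          by (subst \<open>L = [1..<Suc (length L)]\<close>) (auto simp del: upt_Suc)
        then show ?thesis using True by (simp add: perm_of_def)
      qed (auto simp add: perm_of_def)
    qed
    then show ?thesis using invc_sorted[OF \<open>sorted L\<close>] less.prems by simp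
  qed
qed



definition word :: "nat set list \<Rightarrow> nat list" where
  "word P = concat (map sorted_list_of_set P)"

lemma word_Nil[simp]: "word [] = []" and word_Cons[simp]: "word (B # P) = sorted_list_of_set B @ word P"
  and word_append[simp]: "word (P @ Q) = word P @ word Q"
  by (simp_all add: word_def)

lemma set_word: "\<forall>B\<in>set P. finite B \<Longrightarrow> set (word P) = \<Union>(set P)"
  by (induction P) auto

lemma length_word: "\<forall>B\<in>set P. finite B \<Longrightarrow> length (word P) = sum_list (map card P)"
  by (induction P) auto

definition opw :: "nat \<Rightarrow> nat set list \<Rightarrow> bool" where
  "opw n P \<longleftrightarrow> (\<forall>B\<in>set P. B \<noteq> {} \<and> finite B) \<and> distinct (word P) \<and> set (word P) = {1..n}"

lemma op_iff: "P \<in> ordered_partitions n \<longleftrightarrow> opw n P"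
proof
  assume P: "P \<in> ordered_partitions n"
  then have ne: "\<forall>B\<in>set P. B \<noteq> {}" and dj: "\<forall>i<length P. \<forall>j<length P. i \<noteq> j \<longrightarrow> P ! i \<inter> P ! j = {}"
    and un: "\<Union>(set P) = {1..n}" by (auto simp: ordered_partitions_def)
  have fin: "\<forall>B\<in>set P. finite B"
    using un by (metis Sup_upper finite_atLeastAtMost finite_subset)
  have dP: "distinct P"
    unfolding distinct_conv_nth
  proof (intro allI impI)
    fix i j assume "i < length P" "j < length P" "i \<noteq> j"
    then have "P ! i \<inter> P ! j = {}" "P ! i \<noteq> {}" using dj ne by auto
    then show "P ! i \<noteq> P ! j" by auto
  qed
  have inj: "inj_on sorted_list_of_set (set P)"
    using fin by (auto simp: inj_on_def sorted_list_of_set_inject)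
  have "distinct (word P)"
    unfolding word_def distinct_concat_iff
  proof (intro conjI allI impI)
    have "removeAll [] (map sorted_list_of_set P) = map sorted_list_of_set P"
      proof (rule removeAll_id)
      show "[] \<notin> set (map sorted_list_of_set P)"
        using ne fin by (auto simp: sorted_list_of_set_eq_Nil_iff eq_commute[of "[]"])
    qed
    then show "distinct (removeAll [] (map sorted_list_of_set P))"
      using dP inj by (simp add: distinct_map)
    show "\<And>ys. ys \<in> set (map sorted_list_of_set P) \<Longrightarrow> distinct ys" by auto
    fix ys zs assume a: "ys \<in> set (map sorted_list_of_set P) \<and> zs \<in> set (map sorted_list_of_set P) \<and> ys \<noteq> zs"
    then obtain i j where ij: "i < length P" "j < length P" "ys = sorted_list_of_set (P ! i)" "zs = sorted_list_of_set (P ! j)"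
      by (auto simp: in_set_conv_nth)
    then have "i \<noteq> j" using a by auto
    then have "P ! i \<inter> P ! j = {}" using dj ij by auto
    then show "set ys \<inter> set zs = {}" using ij fin by auto
  qed
  then show "opw n P" using ne fin un set_word[OF fin] by (auto simp: opw_def)
next
  assume "opw n P"
  then have ne: "\<forall>B\<in>set P. B \<noteq> {}" and fin: "\<forall>B\<in>set P. finite B" and d: "distinct (word P)"
    and s: "set (word P) = {1..n}" by (auto simp: opw_def)
  have rem: "removeAll [] (map sorted_list_of_set P) = map sorted_list_of_set P"
    proof (rule removeAll_id)
      show "[] \<notin> set (map sorted_list_of_set P)"
        using ne fin by (auto simp: sorted_list_of_set_eq_Nil_iff eq_commute[of "[]"])
    qed
  have dj: "P ! i \<inter> P ! j = {}" if "i < length P" "j < length P" "i \<noteq> j" for i j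
  proof -
    have "distinct (map sorted_list_of_set P)" using d rem
      unfolding word_def distinct_concat_iff by simp
    then have "sorted_list_of_set (P ! i) \<noteq> sorted_list_of_set (P ! j)"
      using that by (simp add: distinct_conv_nth)
    moreover have H: "\<forall>ys zs. ys \<in> sorted_list_of_set ` set P \<and> zs \<in> sorted_list_of_set ` set P \<and> ys \<noteq> zs
        \<longrightarrow> set ys \<inter> set zs = {}"
      using d unfolding word_def distinct_concat_iff by simp
    moreover have "sorted_list_of_set (P ! i) \<in> sorted_list_of_set ` set P"
      "sorted_list_of_set (P ! j) \<in> sorted_list_of_set ` set P" using that by auto
    ultimately have "set (sorted_list_of_set (P ! i)) \<inter> set (sorted_list_of_set (P ! j)) = {}" by blast
    then show ?thesis using fin that by auto
  qed
  then show "P \<in> ordered_partitions n"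
    using ne s set_word[OF fin] by (auto simp: ordered_partitions_def)
qed

lemma opw_length_word: "opw n P \<Longrightarrow> length (word P) = n"
  unfolding opw_def by (metis card_atLeastAtMost diff_Suc_1 distinct_card)

lemma sigma_inv_word: "sigma_inv P = perm_of (word P)"
  by (simp add: sigma_inv_def perm_of_def word_def Let_def)

lemma eps_word: assumes "opw n P" shows "eps P = (-1) ^ invc (word P)"
proof -
  have d: "distinct (word P)" "set (word P) = {1..length (word P)}"
    using assms opw_length_word[OF assms] by (auto simp: opw_def)
  have "permutation (perm_of (word P))"
    using perm_of_permutes[OF d] permutation_permutes by blast
  then show ?thesis
    unfolding eps_def sigma_def sigma_inv_word
    by (simp add: sign_inverse sign_perm_of[OF d])
qed



definition hsum :: "nat set list \<Rightarrow> nat" where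
  "hsum P = sum_list (map (\<lambda>B. card B * (card B - 1)) P)"

definition oddc :: "nat set list \<Rightarrow> nat" where
  "oddc P = length (filter (\<lambda>B. odd (card B)) P)"

definition wt :: "nat set list \<Rightarrow> int" where
  "wt P = (-1) ^ length P * eps P * eps' P"

lemma sum_nth_list: "(\<Sum>i<length P. f (P ! i)) = sum_list (map f P)"
  by (simp add: sum_list_sum_nth atLeast0LessThan)

lemma eps'_hsum: "eps' P = (-1) ^ (hsum P div 2)"
  unfolding eps'_def hsum_def by (subst sum_nth_list) (rule refl)

lemma oddc_card: "card {i. i < length P \<and> odd (card (P ! i))} = oddc P"
  by (simp add: oddc_def length_filter_conv_card)

lemma sorted_set_list: "sorted xs \<Longrightarrow> distinct xs \<Longrightarrow> sorted_list_of_set (set xs) = (xs::nat list)"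
  by (rule sorted_distinct_set_unique) auto

lemma even_sum_list: "\<forall>x\<in>set xs. even (x::nat) \<Longrightarrow> even (sum_list xs)"
  by (induction xs) auto

subsection \<open>Rotation\<close>

lemma opw_rotate1: "opw n (B # Q) \<Longrightarrow> opw n (Q @ [B])"
  unfolding opw_def by auto

lemma oddc_rotate1: "oddc (Q @ [B]) = oddc (B # Q)"
  by (simp add: oddc_def)

lemma wt_rotate1:
  assumes op: "opw n (B # Q)" and od: "oddc (B # Q) \<le> 1"
  shows "wt (Q @ [B]) = wt (B # Q)"
proof -
  have fin: "\<forall>C\<in>set (B # Q). finite C" using op by (auto simp: opw_def)
  have d: "distinct (sorted_list_of_set B @ word Q)" using op unfolding opw_def word_Cons by blast
  have ev: "even (card B * sum_list (map card Q))"
  proof (cases "odd (card B)")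
    case True
    then have "oddc Q = 0" using od by (simp add: oddc_def)
    then have "\<forall>x\<in>set (map card Q). even x" by (auto simp: oddc_def filter_empty_conv)
    then show ?thesis using even_sum_list by auto
  qed simp
  have "eps (Q @ [B]) = (-1) ^ invc ([] @ word Q @ sorted_list_of_set B @ [])"
    using eps_word[OF opw_rotate1[OF op]] by simp
  also have "\<dots> = (-1) ^ (length (sorted_list_of_set B) * length (word Q)) *
      (-1) ^ invc ([] @ sorted_list_of_set B @ word Q @ [])"
    by (rule seg_swap_sign[OF d])
  also have "\<dots> = eps (B # Q)"
    using eps_word[OF op] ev fin by (simp add: length_word)
  finally have "eps (Q @ [B]) = eps (B # Q)" .
  moreover have "hsum (Q @ [B]) = hsum (B # Q)" by (simp add: hsum_def)
  ultimately show ?thesis by (simp add: wt_def eps'_hsum)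
qed

lemma rotate_props:
  assumes "opw n P" "oddc P \<le> 1"
  shows "opw n (rotate k P) \<and> oddc (rotate k P) = oddc P \<and> wt (rotate k P) = wt P"
proof (induction k)
  case 0
  then show ?case using assms by simp
next
  case (Suc k)
  show ?case
  proof (cases "rotate k P")
    case Nil
    then show ?thesis using Suc by simp
  next
    case (Cons B Q)
    then show ?thesis using Suc assms opw_rotate1[of n B Q] oddc_rotate1[of Q B] wt_rotate1[of n B Q]
      by simp
  qed
qed

subsection \<open>Merging the block 12\<close>

lemma dist_mid: "distinct (X @ Y @ Z @ W) \<Longrightarrow> distinct (Y @ Z)"
  by auto

lemma sorted_insert12:
  fixes B :: "nat set"
  assumes "finite B" "\<forall>x\<in>B. x > 2"
  shows "sorted_list_of_set (insert 1 (insert 2 B)) = [1, 2] @ sorted_list_of_set B"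
proof -
  have "sorted ([1, 2] @ sorted_list_of_set B)" "distinct ([1, 2] @ sorted_list_of_set B)"
    using assms by (auto simp: sorted_append less_imp_le)
  then have "sorted_list_of_set (set ([1, 2] @ sorted_list_of_set B)) = [1, 2] @ sorted_list_of_set B"
    by (rule sorted_set_list)
  then show ?thesis using assms by simp
qed

lemma merge_props:
  assumes op: "opw n (A @ [B, {1, 2}] @ C)" and B: "B \<noteq> {}" "\<forall>x\<in>B. x > 2"
  shows "opw n (A @ [insert 1 (insert 2 B)] @ C) \<and>
         oddc (A @ [insert 1 (insert 2 B)] @ C) = oddc (A @ [B, {1, 2}] @ C) \<and>
         wt (A @ [insert 1 (insert 2 B)] @ C) = - wt (A @ [B, {1, 2}] @ C)"
proof -
  have fin: "finite B" using op by (auto simp: opw_def)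
  have "1 \<notin> B" "2 \<notin> B" using B by auto
  then have cB: "card (insert 1 (insert 2 B)) = card B + 2" using fin by simp
  have wm: "word (A @ [insert 1 (insert 2 B)] @ C) = word A @ [1, 2] @ sorted_list_of_set B @ word C"
    using sorted_insert12[OF fin B(2)] by simp
  have ws: "word (A @ [B, {1, 2}] @ C) = word A @ sorted_list_of_set B @ [1, 2] @ word C"
    by simp
  have op': "opw n (A @ [insert 1 (insert 2 B)] @ C)"
    using op wm ws fin unfolding opw_def by auto
  have "distinct (word (A @ [B, {1, 2}] @ C))" using op unfolding opw_def by blast
  then have d: "distinct (sorted_list_of_set B @ [1, 2])" unfolding ws by (rule dist_mid)
  have "eps (A @ [insert 1 (insert 2 B)] @ C) = eps (A @ [B, {1, 2}] @ C)"
    unfolding eps_word[OF op] eps_word[OF op'] wm ws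
    by (subst seg_swap_sign[OF d]) simp
  moreover have "hsum (A @ [insert 1 (insert 2 B)] @ C) = hsum (A @ [B, {1, 2}] @ C) + 4 * card B"
  proof -
    have "(card B + 2) * (card B + 2 - 1) = card B * (card B - 1) + 2 + 4 * card B"
      by (cases "card B") (auto simp: algebra_simps)
    then show ?thesis unfolding hsum_def map_append list.map cB by simp
  qed
  moreover have "(hsum (A @ [B, {1, 2}] @ C) + 4 * card B) div 2 = hsum (A @ [B, {1, 2}] @ C) div 2 + 2 * card B"
    by simp
  ultimately have "wt (A @ [insert 1 (insert 2 B)] @ C) = - wt (A @ [B, {1, 2}] @ C)"
    by (simp add: wt_def eps'_hsum power_add power_mult)
  moreover have "oddc (A @ [insert 1 (insert 2 B)] @ C) = oddc (A @ [B, {1, 2}] @ C)"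
    unfolding oddc_def filter_append filter.simps cB by simp
  ultimately show ?thesis using op' by simp
qed



abbreviation tau :: "nat \<Rightarrow> nat \<Rightarrow> nat" where "tau v \<equiv> Transposition.transpose v (Suc v)"

lemma tau_mono: "\<not> (v \<in> S \<and> Suc v \<in> S) \<Longrightarrow> x \<in> S \<Longrightarrow> y \<in> S \<Longrightarrow> x < y \<Longrightarrow> tau v x < tau v y"
  by (auto simp: Transposition.transpose_def)

lemma invc_map_mono: "(\<forall>x\<in>set W. \<forall>y\<in>set W. x < y \<longrightarrow> f x < f y) \<Longrightarrow> invc (map f W) = invc W"
proof (induction W)
  case (Cons x xs)
  have "filter (\<lambda>y. f y < f x) xs = filter (\<lambda>y. y < x) xs"
  proof (rule filter_cong)
    fix y assume "y \<in> set xs"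
    then show "(f y < f x) = (y < x)" using Cons.prems
      by (metis less_asym linorder_neqE_nat list.set_intros(1) list.set_intros(2))
  qed simp
  then have "length (filter (\<lambda>y. y < f x) (map f xs)) = length (filter (\<lambda>y. y < x) xs)"
    by (simp add: filter_map o_def)
  then show ?case using Cons by simp
qed simp

lemma tau_mono_set: "\<not> (v \<in> set W \<and> Suc v \<in> set W) \<Longrightarrow> \<forall>x\<in>set W. \<forall>y\<in>set W. x < y \<longrightarrow> tau v x < tau v y"
  using tau_mono by blast

lemma invc_tau:
  "distinct W \<Longrightarrow> v \<in> set W \<Longrightarrow> Suc v \<in> set W \<Longrightarrow>
   invc (map (tau v) W) + 1 = invc W \<or> invc W + 1 = invc (map (tau v) W)"
proof (induction W)
  case Nil
  then show ?case by simp
next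
  case (Cons x xs)
  have fl: "length (filter (\<lambda>y. y < tau v x) (map (tau v) xs)) = length (filter (\<lambda>y. tau v y < tau v x) xs)"
    by (simp add: filter_map o_def)
  have dx: "distinct xs" "x \<notin> set xs" using Cons.prems by auto
  consider "x = v" | "x = Suc v" | "x \<noteq> v" "x \<noteq> Suc v" by blast
  then show ?case
  proof cases
    case 1
    then have nv: "v \<notin> set xs" "Suc v \<in> set xs" using Cons.prems by auto
    have inv: "invc (map (tau v) xs) = invc xs"
      by (rule invc_map_mono[OF tau_mono_set]) (use nv in auto)
    have "{y. tau v y < tau v x} \<inter> set xs = insert (Suc v) ({y. y < x} \<inter> set xs)"
      using nv 1 by (auto simp: Transposition.transpose_def)
    then have "length (filter (\<lambda>y. tau v y < tau v x) xs) = Suc (length (filter (\<lambda>y. y < x) xs))"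
      using 1 by (simp add: distinct_length_filter[OF dx(1)])
    then show ?thesis using fl inv by simp
  next
    case 2
    then have nv: "Suc v \<notin> set xs" "v \<in> set xs" using Cons.prems by auto
    have inv: "invc (map (tau v) xs) = invc xs"
      by (rule invc_map_mono[OF tau_mono_set]) (use nv in auto)
    have "{y. y < x} \<inter> set xs = insert v ({y. tau v y < tau v x} \<inter> set xs)"
      using nv 2 by (auto simp: Transposition.transpose_def)
    then have "length (filter (\<lambda>y. y < x) xs) = Suc (length (filter (\<lambda>y. tau v y < tau v x) xs))"
      using 2 by (simp add: distinct_length_filter[OF dx(1)])
    then show ?thesis using fl inv by simp
  next
    case 3
    then have nv: "v \<in> set xs" "Suc v \<in> set xs" using Cons.prems by auto
    have "filter (\<lambda>y. tau v y < tau v x) xs = filter (\<lambda>y. y < x) xs"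
    proof (rule filter_cong)
      fix y assume "y \<in> set xs"
      then show "(tau v y < tau v x) = (y < x)" using 3 dx
        by (auto simp: Transposition.transpose_def)
    qed simp
    then show ?thesis using fl Cons.IH[OF dx(1) nv] by auto
  qed
qed

lemma invc_tau_sign:
  assumes "distinct W" "v \<in> set W" "Suc v \<in> set W"
  shows "(-1::int) ^ invc (map (tau v) W) = - ((-1) ^ invc W)"
proof -
  have "invc (map (tau v) W) + 1 = invc W \<or> invc W + 1 = invc (map (tau v) W)"
    by (rule invc_tau[OF assms])
  then show ?thesis
  proof
    assume h: "invc (map (tau v) W) + 1 = invc W"
    show ?thesis unfolding h[symmetric] by simp
  next
    assume h: "invc W + 1 = invc (map (tau v) W)"
    show ?thesis unfolding h[symmetric] by simp
  qed
qed

lemma sorted_image_tau: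
  assumes "finite B" "\<not> (v \<in> B \<and> Suc v \<in> B)"
  shows "sorted_list_of_set (tau v ` B) = map (tau v) (sorted_list_of_set B)"
proof -
  have "sorted_wrt (<) (sorted_list_of_set B)" by (rule strict_sorted_list_of_set)
  then have "sorted_wrt (<) (map (tau v) (sorted_list_of_set B))"
    unfolding sorted_wrt_map
    by (rule sorted_wrt_mono_rel[rotated]) (use assms tau_mono in auto)
  then have "sorted (map (tau v) (sorted_list_of_set B))" "distinct (map (tau v) (sorted_list_of_set B))"
    by (auto simp: strict_sorted_iff)
  then have "sorted_list_of_set (set (map (tau v) (sorted_list_of_set B))) = map (tau v) (sorted_list_of_set B)"
    by (rule sorted_set_list)
  then show ?thesis using assms by simp
qed

lemma word_tau: "\<forall>B\<in>set P. finite B \<and> \<not> (v \<in> B \<and> Suc v \<in> B) \<Longrightarrow>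
  word (map ((`) (tau v)) P) = map (tau v) (word P)"
  by (induction P) (auto simp: sorted_image_tau)

lemma tau_props:
  assumes op: "opw n P" and nb: "\<forall>B\<in>set P. \<not> (v \<in> B \<and> Suc v \<in> B)" and v: "1 \<le> v" "Suc v \<le> n"
  shows "opw n (map ((`) (tau v)) P) \<and> oddc (map ((`) (tau v)) P) = oddc P \<and>
    wt (map ((`) (tau v)) P) = - wt P"
proof -
  have fin: "\<forall>B\<in>set P. finite B" using op by (auto simp: opw_def)
  have ww: "word (map ((`) (tau v)) P) = map (tau v) (word P)"
    using word_tau fin nb by blast
  have im: "tau v ` {1..n} = {1..n}" using v by simp
  have sw: "set (word P) = {1..n}" "distinct (word P)" using op by (auto simp: opw_def)
  have s: "set (word (map ((`) (tau v)) P)) = {1..n}" unfolding ww set_map sw(1) by (rule im)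
  have d: "distinct (word (map ((`) (tau v)) P))" unfolding ww using sw(2) by (simp add: distinct_map)
  have op': "opw n (map ((`) (tau v)) P)"
    using op fin s d unfolding opw_def by auto
  have cards: "map card (map ((`) (tau v)) P) = map card P"
    by (simp add: card_image)
  have "hsum (map ((`) (tau v)) P) = hsum P"
    unfolding hsum_def by (simp add: card_image o_def)
  moreover have "eps (map ((`) (tau v)) P) = - eps P"
    unfolding eps_word[OF op] eps_word[OF op'] ww
    by (rule invc_tau_sign) (use op v in \<open>auto simp: opw_def\<close>)
  ultimately have "wt (map ((`) (tau v)) P) = - wt P"
    by (simp add: wt_def eps'_hsum)
  moreover have "oddc (map ((`) (tau v)) P) = oddc P"
    unfolding oddc_def by (simp add: filter_map o_def card_image)
  ultimately show ?thesis using op' by simp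
qed



definition mu :: "nat \<Rightarrow> (nat \<Rightarrow> real) \<Rightarrow> nat \<Rightarrow> real" where
  "mu n lam i = lam i - (\<Sum>j=1..n. lam j) / real n"

lemma key_lemma:
  fixes n :: nat and lam :: "nat \<Rightarrow> real"
  assumes n1: "n \<ge> 1" and pos: "(\<Sum>i=1..n. lam i) > 0" and N: "Nlam n lam = n"
    and J: "J \<subseteq> {1..n}" "J \<noteq> {}" "J \<noteq> {1..n}"
  shows "(0 < sum lam J \<longleftrightarrow> 0 < sum (mu n lam) J) \<and> sum (mu n lam) J \<noteq> 0"
proof -
  define c where "c = (\<Sum>j=1..n. lam j) / real n"
  have c0: "c > 0" using pos n1 by (simp add: c_def)
  have muJ: "sum (mu n lam) K = sum lam K - c * real (card K)" for K
    by (simp add: mu_def c_def sum_subtractf mult.commute)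
  define S where "S = {sJ lam J / real (card J) | J. J \<subseteq> {1..n} \<and> sJ lam J > 0}"
  have Sfin: "finite S"
  proof -
    have "S \<subseteq> (\<lambda>J. sJ lam J / real (card J)) ` Pow {1..n}" by (auto simp: S_def)
    then show ?thesis by (rule finite_subset) simp
  qed
  have full: "sJ lam {1..n} > 0" using pos by (simp add: sJ_def)
  have cfull: "sJ lam {1..n} / real (card {1..n}) = c" by (simp add: sJ_def c_def)
  have "c \<in> S" unfolding S_def
    by (rule CollectI, rule exI[of _ "{1..n}"]) (use full cfull in auto)
  then have Sne: "S \<noteq> {}" by auto
  define D where "D = Min S"
  have Dd: "delta n lam = D" by (simp add: delta_def D_def S_def)
  have DS: "D \<in> S" using Sfin Sne by (simp add: D_def)
  have Dle: "D \<le> x" if "x \<in> S" for x using Sfin that by (simp add: D_def)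
  define T where "T = {card J | J. J \<subseteq> {1..n} \<and> sJ lam J > 0 \<and> sJ lam J / real (card J) = delta n lam}"
  have Tfin: "finite T"
  proof -
    have "T \<subseteq> card ` Pow {1..n}" by (auto simp: T_def)
    then show ?thesis by (rule finite_subset) simp
  qed
  have Tne: "T \<noteq> {}" using DS unfolding T_def S_def Dd by blast
  have NT: "Nlam n lam = Min T" by (simp add: Nlam_def T_def)
  have "Min T \<in> T" using Tfin Tne by simp
  then obtain J1 where J1: "J1 \<subseteq> {1..n}" "sJ lam J1 / real (card J1) = D" "card J1 = n"
    using N NT Dd unfolding T_def by auto
  have "J1 = {1..n}" using J1 by (simp add: card_subset_eq)
  then have Dc: "D = c" using J1 cfull by simp
  have Tge: "n \<le> x" if "x \<in> T" for x using Min_le[OF Tfin that] N NT by simp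
  have finJ: "finite J" using J(1) finite_subset by blast
  have cardJ: "card J > 0" using finJ J(2) by (simp add: card_gt_0_iff)
  have cardJ': "card J \<noteq> n"
    using J(1) J(3) card_subset_eq[of "{1..n}" J] by auto
  have gt: "sum lam J > c * real (card J)" if "sum lam J > 0"
  proof -
    have r: "sJ lam J / real (card J) \<in> S" using that J(1) by (auto simp: S_def sJ_def)
    have "sJ lam J / real (card J) \<noteq> c"
    proof
      assume "sJ lam J / real (card J) = c"
      then have "card J \<in> T" unfolding T_def
        by (rule_tac CollectI, rule_tac exI[of _ J]) (use that J(1) Dd Dc in \<open>auto simp: sJ_def\<close>)
      then have "n \<le> card J" by (rule Tge)
      moreover have "card J \<le> n" using card_mono[OF _ J(1)] by simp
      ultimately show False using cardJ' by simp
    qed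
    then have "sJ lam J / real (card J) > c" using Dle[OF r] Dc by simp
    then show ?thesis using cardJ by (simp add: sJ_def field_simps)
  qed
  have "0 < sum lam J \<longleftrightarrow> 0 < sum (mu n lam) J"
  proof
    assume "0 < sum lam J" then show "0 < sum (mu n lam) J" using gt muJ by simp
  next
    assume "0 < sum (mu n lam) J"
    then have "sum lam J > c * real (card J)" using muJ by simp
    moreover have "c * real (card J) \<ge> 0" using c0 by simp
    ultimately show "0 < sum lam J" by linarith
  qed
  moreover have "sum (mu n lam) J \<noteq> 0"
  proof
    assume h: "sum (mu n lam) J = 0"
    then have "sum lam J = c * real (card J)" using muJ by simp
    moreover have "c * real (card J) > 0" using c0 cardJ by simp
    ultimately show False using gt by simp
  qed
  ultimately show ?thesis by blast
qed

lemma mu_full: "n \<ge> 1 \<Longrightarrow> sum (mu n lam) {1..n} = 0"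
  by (simp add: mu_def sum_subtractf)



definition Gs :: "nat \<Rightarrow> (nat \<Rightarrow> real) \<Rightarrow> nat set list \<Rightarrow> real" where
  "Gs n lam Q = sum (mu n lam) (set (word Q))"

definition good :: "nat \<Rightarrow> (nat \<Rightarrow> real) \<Rightarrow> nat set list \<Rightarrow> bool" where
  "good n lam P \<longleftrightarrow> (\<forall>t. 0 < t \<and> t < length P \<longrightarrow> Gs n lam (take t P) > 0)"

lemma word_take_drop: "word (take t X) @ word (drop t X) = word X"
  by (metis append_take_drop_id word_append)

lemma opw_rotate: "opw n P \<Longrightarrow> opw n (rotate k P)"
proof (induction k)
  case (Suc k)
  then show ?case by (cases "rotate k P") (auto intro: opw_rotate1)
qed simp

lemma Gs_append: "distinct (word (xs @ ys)) \<Longrightarrow> Gs n lam (xs @ ys) = Gs n lam xs + Gs n lam ys"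
  unfolding Gs_def by (simp add: sum.union_disjoint)

lemma opw_Gs: "n \<ge> 1 \<Longrightarrow> opw n X \<Longrightarrow> Gs n lam X = 0"
  unfolding Gs_def opw_def using mu_full by simp

lemma opw_ne: "n \<ge> 1 \<Longrightarrow> opw n X \<Longrightarrow> X \<noteq> []"
  unfolding opw_def by auto

lemma dist_take: "distinct (word X) \<Longrightarrow> distinct (word (take t X))"
  by (metis distinct_append word_take_drop)

lemma dist_drop: "distinct (word X) \<Longrightarrow> distinct (word (drop t X))"
  by (metis distinct_append word_take_drop)

lemma prefix_props:
  assumes op: "opw n X" and t: "0 < t" "t < length X"
  shows "set (word (take t X)) \<subseteq> {1..n} \<and> set (word (take t X)) \<noteq> {} \<and> set (word (take t X)) \<noteq> {1..n}"
proof -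
  have fin: "\<forall>B\<in>set X. finite B" and ne: "\<forall>B\<in>set X. B \<noteq> {}" and d: "distinct (word X)"
    and s: "set (word X) = {1..n}" using op by (auto simp: opw_def)
  have "set (word (take t X)) \<subseteq> set (word X)" by (metis set_append Un_upper1 word_take_drop)
  then have sub: "set (word (take t X)) \<subseteq> {1..n}" using s by simp
  have "X ! 0 \<in> set (take t X)" using t by (simp add: in_set_conv_nth exI[of _ 0])
  moreover have x0: "X ! 0 \<in> set X" using t by (intro nth_mem) linarith
  then have "X ! 0 \<noteq> {}" "finite (X ! 0)" using ne fin by blast+
  moreover have "set (word (take t X)) = \<Union>(set (take t X))"
    using fin by (intro set_word) (meson in_set_takeD)
  ultimately have nem: "set (word (take t X)) \<noteq> {}" by auto
  have "X ! t \<in> set (drop t X)" using t by (metis Cons_nth_drop_Suc list.set_intros(1))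
  moreover have xt: "X ! t \<in> set X" using t by (intro nth_mem) simp
  then have "X ! t \<noteq> {}" "finite (X ! t)" using ne fin by blast+
  moreover have "set (word (drop t X)) = \<Union>(set (drop t X))"
    using fin by (intro set_word) (meson in_set_dropD)
  ultimately obtain x where x: "x \<in> set (word (drop t X))" by auto
  have "set (word (drop t X)) \<subseteq> set (word X)" by (metis set_append Un_upper2 word_take_drop)
  then have "x \<in> {1..n}" using s x by blast
  moreover have "x \<notin> set (word (take t X))" using d x word_take_drop[of t X]
    by (metis disjoint_iff distinct_append)
  ultimately show ?thesis using sub nem by auto
qed

lemma sumlist_word: "\<forall>B\<in>set Q. finite B \<Longrightarrow> distinct (word Q) \<Longrightarrow>
    sum_list (map (sJ f) Q) = sum f (set (word Q))"
proof (induction Q)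
  case (Cons B Q)
  then have "set (sorted_list_of_set B) \<inter> set (word Q) = {}" by auto
  then have "B \<inter> set (word Q) = {}" using Cons.prems by simp
  then show ?case using Cons by (simp add: sJ_def sum.union_disjoint)
qed simp

lemma sum_atMost_take: "i < length P \<Longrightarrow> (\<Sum>j\<le>i. g (P ! j)) = sum_list (map g (take (Suc i) P))"
proof -
  assume i: "i < length P"
  have "sum_list (map g (take (Suc i) P)) = (\<Sum>j<length (take (Suc i) P). g (take (Suc i) P ! j))"
    by (rule sum_nth_list[symmetric])
  also have "\<dots> = (\<Sum>j<Suc i. g (P ! j))" using i by (intro sum.cong) auto
  finally show ?thesis by (simp add: lessThan_Suc_atMost)
qed

lemma Pord_iff:
  fixes n :: nat and lam :: "nat \<Rightarrow> real"
  assumes n1: "n \<ge> 1" and pos: "(\<Sum>i=1..n. lam i) > 0" and N: "Nlam n lam = n"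
  shows "P \<in> P_ord n lam \<longleftrightarrow> opw n P \<and> good n lam P"
proof -
  have eq: "(\<Sum>j\<le>i. sJ lam (P ! j)) = sum lam (set (word (take (Suc i) P)))"
    if op: "opw n P" and i: "i < length P" for i
  proof -
    have fin: "\<forall>B\<in>set (take (Suc i) P). finite B" using op by (auto simp: opw_def dest: in_set_takeD)
    have d: "distinct (word (take (Suc i) P))" using op dist_take by (auto simp: opw_def)
    show ?thesis using sum_atMost_take[OF i, of "sJ lam"] sumlist_word[OF fin d, of lam] by simp
  qed
  show ?thesis
  proof
    assume "P \<in> P_ord n lam"
    then have op: "opw n P" and H: "\<forall>i<length P. (\<Sum>j\<le>i. sJ lam (P ! j)) > 0"
      by (auto simp: P_ord_def op_iff)
    have "Gs n lam (take t P) > 0" if t: "0 < t" "t < length P" for t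
    proof -
      obtain i where ti: "t = Suc i" using t by (cases t) auto
      have "sum lam (set (word (take t P))) > 0" using H eq[OF op] t ti by auto
      then show ?thesis using key_lemma[OF n1 pos N] prefix_props[OF op t] by (auto simp: Gs_def)
    qed
    then show "opw n P \<and> good n lam P" using op by (auto simp: good_def)
  next
    assume a: "opw n P \<and> good n lam P"
    then have op: "opw n P" and g: "good n lam P" by auto
    have "(\<Sum>j\<le>i. sJ lam (P ! j)) > 0" if i: "i < length P" for i
    proof (cases "Suc i = length P")
      case True
      then have "set (word (take (Suc i) P)) = {1..n}" using op by (simp add: opw_def)
      then show ?thesis using eq[OF op i] pos by simp
    next
      case False
      then have t: "0 < Suc i" "Suc i < length P" using i by auto
      have "Gs n lam (take (Suc i) P) > 0" using g t by (auto simp: good_def)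
      then have "sum lam (set (word (take (Suc i) P))) > 0"
        using key_lemma[OF n1 pos N] prefix_props[OF op t] by (auto simp: Gs_def)
      then show ?thesis using eq[OF op i] by simp
    qed
    then show "P \<in> P_ord n lam" using op by (auto simp: P_ord_def op_iff)
  qed
qed

lemma rot_eq: "a < length P \<Longrightarrow> rotate a P = drop a P @ take a P"
  by (simp add: rotate_drop_take)

lemma good_unique:
  assumes n1: "n \<ge> 1" and op: "opw n Q" and g: "good n lam Q" and g': "good n lam (rotate c Q)"
  shows "c mod length Q = 0"
proof (rule ccontr)
  assume h: "c mod length Q \<noteq> 0"
  define a where "a = c mod length Q"
  have ne: "Q \<noteq> []" using opw_ne[OF n1 op] .
  then have a: "0 < a" "a < length Q" using h by (auto simp: a_def)
  have r: "rotate c Q = drop a Q @ take a Q" by (simp add: a_def rotate_drop_take)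
  have "take (length Q - a) (rotate c Q) = drop a Q" using a by (simp add: r)
  moreover have "0 < length Q - a" "length Q - a < length (rotate c Q)" using a by auto
  ultimately have pos: "Gs n lam (drop a Q) > 0" using g' unfolding good_def by metis
  have d: "distinct (word (take a Q @ drop a Q))" using op by (simp add: opw_def)
  have "Gs n lam (take a Q) + Gs n lam (drop a Q) = 0"
    using Gs_append[OF d] opw_Gs[OF n1 op] by simp
  moreover have "Gs n lam (take a Q) > 0" using g a unfolding good_def by blast
  ultimately show False using pos by simp
qed

lemma good_exists:
  assumes n1: "n \<ge> 1" and pos: "(\<Sum>i=1..n. lam i) > 0" and N: "Nlam n lam = n" and op: "opw n P"
  shows "\<exists>a<length P. good n lam (rotate a P)"
proof -
  define k where "k = length P"
  have k0: "k > 0" using opw_ne[OF n1 op] by (simp add: k_def)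
  define m where "m = Min ((\<lambda>a. Gs n lam (take a P)) ` {..<k})"
  have "m \<in> (\<lambda>a. Gs n lam (take a P)) ` {..<k}" unfolding m_def using k0 by (intro Min_in) auto
  then obtain a where a: "a < k" "Gs n lam (take a P) = m" by auto
  have mle: "m \<le> Gs n lam (take b P)" if "b < k" for b unfolding m_def using that by (intro Min_le) auto
  have m0: "m \<le> 0" using mle[of 0] k0 by (simp add: Gs_def)
  have dP: "distinct (word P)" using op by (simp add: opw_def)
  have GP: "Gs n lam P = 0" using opw_Gs[OF n1 op] .
  have td: "Gs n lam (take b P) + Gs n lam (drop b P) = 0" for b
    using Gs_append[of "take b P" "drop b P"] dP GP by simp
  have opr: "opw n (rotate a P)" using opw_rotate[OF op] .
  have r: "rotate a P = drop a P @ take a P" using a(1) by (simp add: k_def rot_eq)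
  have "Gs n lam (take t (rotate a P)) > 0" if t: "0 < t" "t < length P" for t
  proof -
    have t': "0 < t" "t < length (rotate a P)" using t by auto
    have nz: "Gs n lam (take t (rotate a P)) \<noteq> 0"
      using key_lemma[OF n1 pos N] prefix_props[OF opr t'] by (auto simp: Gs_def)
    have dr: "distinct (word (take t (rotate a P)))" using opr dist_take by (auto simp: opw_def)
    have "Gs n lam (take t (rotate a P)) \<ge> 0"
    proof (cases "t \<le> k - a")
      case True
      then have e: "take t (rotate a P) = take t (drop a P)" using r a by (simp add: k_def)
      have e2: "take (a + t) P = take a P @ take t (drop a P)" by (rule take_add)
      have "Gs n lam (take (a + t) P) = Gs n lam (take a P) + Gs n lam (take t (drop a P))"
        using Gs_append[of "take a P" "take t (drop a P)"] dist_take[OF dP, of "a + t"] e2 by simp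
      moreover have "Gs n lam (take (a + t) P) \<ge> m"
      proof (cases "a + t < k")
        case True then show ?thesis using mle by simp
      next
        case False
        then have "a + t = k" using \<open>t \<le> k - a\<close> a by simp
        then have "take (a + t) P = P" by (simp add: k_def)
        then show ?thesis using GP m0 by simp
      qed
      ultimately show ?thesis using e a by simp
    next
      case False
      have l: "length (drop a P) = k - a" by (simp add: k_def)
      have e1: "take t (rotate a P) = take t (drop a P) @ take (t - (k - a)) (take a P)"
        unfolding r take_append l ..
      have e2: "take t (drop a P) = drop a P" using False l by simp
      have e3: "take (t - (k - a)) (take a P) = take (t + a - k) P"
      proof -
        have "t - (k - a) = t + a - k" "t + a - k \<le> a" using False t a by (auto simp: k_def)
        then show ?thesis by (simp add: min_def)
      qed
      have e: "take t (rotate a P) = drop a P @ take (t + a - k) P" using e1 e2 e3 by simp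
      have "Gs n lam (take t (rotate a P)) = Gs n lam (drop a P) + Gs n lam (take (t + a - k) P)"
        using Gs_append[of "drop a P" "take (t + a - k) P"] dr e by simp
      moreover have "Gs n lam (take (t + a - k) P) \<ge> m" using mle t a by (simp add: k_def)
      moreover have "Gs n lam (drop a P) = - m" using td[of a] a by simp
      ultimately show ?thesis by simp
    qed
    then show ?thesis using nz by simp
  qed
  then show ?thesis using a(1) unfolding good_def k_def by auto
qed



definition XS :: "nat \<Rightarrow> nat set list set" where
  "XS n = {P. opw n P \<and> oddc P \<le> 1 \<and> n \<in> P ! 0}"

lemma blk_unique:
  assumes "opw n P" "i < length P" "j < length P" "x \<in> P ! i" "x \<in> P ! j"
  shows "i = j"
  using assms unfolding op_iff[symmetric] ordered_partitions_def by blast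

lemma idx_props:
  assumes "opw n P" "x \<in> {1..n}"
  shows "(LEAST i. i < length P \<and> x \<in> P ! i) < length P \<and> x \<in> P ! (LEAST i. i < length P \<and> x \<in> P ! i)"
proof -
  have "x \<in> \<Union>(set P)" using assms unfolding op_iff[symmetric] ordered_partitions_def by auto
  then have "\<exists>i. i < length P \<and> x \<in> P ! i" by (auto simp: in_set_conv_nth)
  then show ?thesis by (rule LeastI_ex)
qed

lemma idx_eq:
  assumes "opw n P" "i < length P" "x \<in> P ! i"
  shows "(LEAST i. i < length P \<and> x \<in> P ! i) = i"
proof (rule Least_equality)
  show "i < length P \<and> x \<in> P ! i" using assms by simp
  show "\<And>y. y < length P \<and> x \<in> P ! y \<Longrightarrow> i \<le> y" using blk_unique[OF assms(1)] assms by fastforce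
qed

lemma P0_ord_iff:
  fixes n :: nat and lam :: "nat \<Rightarrow> real"
  assumes n1: "n \<ge> 1" and pos: "(\<Sum>i=1..n. lam i) > 0" and N: "Nlam n lam = n"
  shows "P \<in> P0_ord n lam \<longleftrightarrow> opw n P \<and> good n lam P \<and> oddc P \<le> 1"
  using Pord_iff[OF n1 pos N] by (auto simp: P0_ord_def oddc_card)

definition fR :: "nat \<Rightarrow> nat set list \<Rightarrow> nat set list" where
  "fR n P = rotate (LEAST i. i < length P \<and> n \<in> P ! i) P"

definition hR :: "nat \<Rightarrow> (nat \<Rightarrow> real) \<Rightarrow> nat set list \<Rightarrow> nat set list" where
  "hR n lam P = rotate (SOME a. a < length P \<and> good n lam (rotate a P)) P"

lemma fR_first:
  assumes n1: "n \<ge> 1" and op: "opw n P"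
  shows "n \<in> fR n P ! 0"
proof -
  define a where "a = (LEAST i. i < length P \<and> n \<in> P ! i)"
  have a: "a < length P" "n \<in> P ! a" using idx_props[OF op, of n] n1 by (auto simp: a_def)
  moreover have "P \<noteq> []" using a by auto
  ultimately have "fR n P ! 0 = P ! a" using nth_rotate[of 0 P a] by (simp add: fR_def a_def[symmetric])
  then show ?thesis using a by simp
qed

lemma sum_transfer:
  fixes n :: nat and lam :: "nat \<Rightarrow> real"
  assumes n1: "n \<ge> 1" and pos: "(\<Sum>i=1..n. lam i) > 0" and N: "Nlam n lam = n"
  shows "(\<Sum>P\<in>P0_ord n lam. wt P) = (\<Sum>P\<in>XS n. wt P)"
proof (rule sum.reindex_bij_witness[where i = "hR n lam" and j = "fR n"])
  note iff = P0_ord_iff[OF n1 pos N]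
  have hR_props: "opw n (hR n lam P) \<and> good n lam (hR n lam P) \<and> (\<exists>b. hR n lam P = rotate b P)"
    if op: "opw n P" for P
  proof -
    have "\<exists>a. a < length P \<and> good n lam (rotate a P)" using good_exists[OF n1 pos N op] by blast
    then have "good n lam (hR n lam P)" unfolding hR_def by (rule someI_ex[where P = "\<lambda>a. a < length P \<and> good n lam (rotate a P)", THEN conjunct2])
    then show ?thesis using opw_rotate[OF op] by (auto simp: hR_def)
  qed
  fix Q assume Q: "Q \<in> P0_ord n lam"
  then have op: "opw n Q" and g: "good n lam Q" and od: "oddc Q \<le> 1" using iff by auto
  have opf: "opw n (fR n Q)" by (simp add: fR_def opw_rotate[OF op])
  obtain b where b: "hR n lam (fR n Q) = rotate b (fR n Q)" using hR_props[OF opf] by blast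
  have gh: "good n lam (hR n lam (fR n Q))" using hR_props[OF opf] by blast
  define a where "a = (LEAST i. i < length Q \<and> n \<in> Q ! i)"
  have hf: "hR n lam (fR n Q) = rotate (b + a) Q" using b by (simp add: fR_def a_def rotate_rotate)
  then have "(b + a) mod length Q = 0" using good_unique[OF n1 op g] gh by simp
  then show "hR n lam (fR n Q) = Q" using hf by simp
  show "fR n Q \<in> XS n" using rotate_props[OF op od] fR_first[OF n1 op] od by (simp add: XS_def fR_def)
  show "wt (fR n Q) = wt Q" using rotate_props[OF op od] by (simp add: fR_def)
next
  note iff = P0_ord_iff[OF n1 pos N]
  have hR_props: "opw n (hR n lam P) \<and> good n lam (hR n lam P) \<and> (\<exists>b. hR n lam P = rotate b P)"
    if op: "opw n P" for P
  proof -
    have "\<exists>a. a < length P \<and> good n lam (rotate a P)" using good_exists[OF n1 pos N op] by blast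
    then have "good n lam (hR n lam P)" unfolding hR_def by (rule someI_ex[where P = "\<lambda>a. a < length P \<and> good n lam (rotate a P)", THEN conjunct2])
    then show ?thesis using opw_rotate[OF op] by (auto simp: hR_def)
  qed
  fix P assume P: "P \<in> XS n"
  then have op: "opw n P" and od: "oddc P \<le> 1" and nP: "n \<in> P ! 0" by (auto simp: XS_def)
  obtain b where b: "hR n lam P = rotate b P" using hR_props[OF op] by blast
  have oph: "opw n (hR n lam P)" using hR_props[OF op] by blast
  show "hR n lam P \<in> P0_ord n lam" using hR_props[OF op] rotate_props[OF op od] b iff od by auto
  define c where "c = (LEAST i. i < length (hR n lam P) \<and> n \<in> hR n lam P ! i)"
  have fh: "fR n (hR n lam P) = rotate (c + b) P" by (simp add: fR_def c_def b rotate_rotate)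
  have ne: "P \<noteq> []" using opw_ne[OF n1 op] .
  have "n \<in> fR n (hR n lam P) ! 0" by (rule fR_first[OF n1 oph])
  then have "n \<in> P ! ((c + b) mod length P)" using ne by (simp add: fh nth_rotate)
  then have "(c + b) mod length P = 0" using blk_unique[OF op _ _ _ nP] ne by simp
  then show "fR n (hR n lam P) = P" using fh by simp
qed



definition tog :: "nat set list \<Rightarrow> nat \<Rightarrow> nat \<Rightarrow> bool" where
  "tog P a b \<longleftrightarrow> (\<exists>B\<in>set P. a \<in> B \<and> b \<in> B)"

definition SP :: "nat \<Rightarrow> nat set list \<Rightarrow> nat set" where
  "SP n P = {j. 1 \<le> j \<and> 2 * j < n \<and> \<not> tog P (2 * j - 1) (2 * j)}"

definition Phi2 :: "nat set list \<Rightarrow> nat set list" where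
  "Phi2 P = (let i = (LEAST i. i < length P \<and> 1 \<in> P ! i) in
     if P ! i = {1, 2} \<and> 0 < i then take (i - 1) P @ [insert 1 (insert 2 (P ! (i - 1)))] @ drop (Suc i) P
     else take i P @ [P ! i - {1, 2}, {1, 2}] @ drop (Suc i) P)"

definition Phi :: "nat \<Rightarrow> nat set list \<Rightarrow> nat set list" where
  "Phi n P = (if SP n P \<noteq> {} then map ((`) (tau (2 * Min (SP n P) - 1))) P else Phi2 P)"

lemma split_opw:
  assumes op: "opw n (A @ [insert 1 (insert 2 B)] @ C)" and B: "B \<noteq> {}" "\<forall>x\<in>B. x > 2"
  shows "opw n (A @ [B, {1, 2}] @ C)"
proof -
  have fin: "finite B" using op by (auto simp: opw_def)
  have wm: "word (A @ [insert 1 (insert 2 B)] @ C) = word A @ [1, 2] @ sorted_list_of_set B @ word C"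
    using sorted_insert12[OF fin B(2)] by simp
  have ws: "word (A @ [B, {1, 2}] @ C) = word A @ sorted_list_of_set B @ [1, 2] @ word C"
    by simp
  show ?thesis using op wm ws fin B unfolding opw_def by auto
qed

lemma Phi2_S:
  assumes op: "opw n (A @ [B, {1, 2}] @ C)" and B: "B \<noteq> {}" "\<forall>x\<in>B. x > 2"
  shows "Phi2 (A @ [B, {1, 2}] @ C) = A @ [insert 1 (insert 2 B)] @ C"
proof -
  define S where "S = A @ [B, {1, 2}] @ C"
  have "(LEAST i. i < length S \<and> 1 \<in> S ! i) = Suc (length A)"
    by (rule idx_eq[OF op[folded S_def]]) (auto simp: S_def nth_append)
  then show ?thesis unfolding S_def[symmetric] Phi2_def
    by (simp add: S_def nth_append)
qed

lemma Phi2_M: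
  assumes op: "opw n (A @ [insert 1 (insert 2 B)] @ C)" and B: "B \<noteq> {}" "\<forall>x\<in>B. x > 2"
  shows "Phi2 (A @ [insert 1 (insert 2 B)] @ C) = A @ [B, {1, 2}] @ C"
proof -
  define M where "M = A @ [insert 1 (insert 2 B)] @ C"
  have "(LEAST i. i < length M \<and> 1 \<in> M ! i) = length A"
    by (rule idx_eq[OF op[folded M_def]]) (auto simp: M_def nth_append)
  moreover have "insert 1 (insert 2 B) \<noteq> {1, 2}"
  proof
    assume h: "insert 1 (insert 2 B) = {1, 2}"
    obtain x where x: "x \<in> B" using B(1) by auto
    then have "x \<in> {1, 2}" using h by blast
    then show False using B(2) x by auto
  qed
  moreover have "insert 1 (insert 2 B) - {1, 2} = B" using B by auto
  ultimately show ?thesis unfolding M_def[symmetric] Phi2_def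
    by (simp add: M_def nth_append)
qed

lemma SP_MS:
  "SP n (A @ [insert 1 (insert 2 B)] @ C) = SP n (A @ [B, {1, 2}] @ C)"
proof -
  have "tog (A @ [insert 1 (insert 2 B)] @ C) (2 * j - 1) (2 * j) = tog (A @ [B, {1, 2}] @ C) (2 * j - 1) (2 * j)"
    if "1 \<le> j" for j
  proof (cases "j = 1")
    case True
    then show ?thesis by (auto simp: tog_def)
  next
    case False
    then have "2 * j - 1 \<notin> {1, 2}" "2 * j \<notin> {1, 2}" using that by auto
    then show ?thesis by (auto simp: tog_def)
  qed
  then show ?thesis unfolding SP_def by blast
qed

lemma first_MS:
  fixes n :: nat and A C :: "nat set list" and B :: "nat set"
  assumes "n \<ge> 3"
  shows "n \<in> (A @ [insert 1 (insert 2 B)] @ C) ! 0 \<longleftrightarrow> n \<in> (A @ [B, {1, 2}] @ C) ! 0"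
  using assms by (cases A) auto

lemma oddc_MS_eq:
  assumes op: "opw n (A @ [B, {1, 2}] @ C)" and B: "B \<noteq> {}" "\<forall>x\<in>B. x > 2"
  shows "oddc (A @ [insert 1 (insert 2 B)] @ C) = oddc (A @ [B, {1, 2}] @ C)"
  using merge_props[OF op B] by simp

lemma decomp:
  assumes P: "P \<in> XS n" and n3: "n \<ge> 3" and sp: "SP n P = {}"
  shows "\<exists>A B C. B \<noteq> {} \<and> (\<forall>x\<in>B. x > 2) \<and> opw n (A @ [B, {1, 2}] @ C) \<and>
     (P = A @ [B, {1, 2}] @ C \<or> P = A @ [insert 1 (insert 2 B)] @ C)"
proof -
  have op: "opw n P" and nP: "n \<in> P ! 0" using P by (auto simp: XS_def)
  have un: "\<Union>(set P) = {1..n}" using op unfolding op_iff[symmetric] ordered_partitions_def by blast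
  have ge1: "x \<ge> 1" if "j < length P" "x \<in> P ! j" for j x
    using that un nth_mem[of j P] by fastforce
  have ne: "P ! j \<noteq> {}" if "j < length P" for j
    using that op nth_mem[of j P] by (auto simp: opw_def)
  have "1 \<notin> SP n P" using sp by simp
  then have "tog P 1 2" using n3 by (simp add: SP_def)
  then obtain i' where i': "i' < length P" "1 \<in> P ! i'" "2 \<in> P ! i'"
    by (auto simp: tog_def in_set_conv_nth)
  define i where "i = (LEAST i. i < length P \<and> 1 \<in> P ! i)"
  have ii: "i = i'" unfolding i_def by (rule idx_eq[OF op i'(1,2)])
  have i: "i < length P" "1 \<in> P ! i" "2 \<in> P ! i" using i' ii by auto
  show ?thesis
  proof (cases "P ! i = {1, 2} \<and> 0 < i")
    case True
    define A where "A = take (i - 1) P"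
    define B where "B = P ! (i - 1)"
    define C where "C = drop (Suc i) P"
    have i1: "i - 1 < length P" using i by simp
    have d1: "P ! i # drop (Suc i) P = drop i P" by (rule Cons_nth_drop_Suc[OF i(1)])
    have d2: "P ! (i - 1) # drop (Suc (i - 1)) P = drop (i - 1) P" by (rule Cons_nth_drop_Suc[OF i1])
    have "Suc (i - 1) = i" using True by simp
    then have "P ! (i - 1) # P ! i # drop (Suc i) P = drop (i - 1) P" using d1 d2 by simp
    then have "A @ [B, {1, 2}] @ C = take (i - 1) P @ drop (i - 1) P"
      using True by (simp add: A_def B_def C_def)
    then have eq: "P = A @ [B, {1, 2}] @ C" by simp
    have "B \<noteq> {}" using ne[OF i1] by (simp add: B_def)
    moreover have "\<forall>x\<in>B. x > 2"
    proof
      fix x assume x: "x \<in> B"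
      have "x \<noteq> 1" "x \<noteq> 2" using blk_unique[OF op i1 i(1), of x] x True i by (auto simp: B_def)
      moreover have "x \<ge> 1" using ge1[OF i1] x by (simp add: B_def)
      ultimately show "x > 2" by simp
    qed
    ultimately show ?thesis using eq op by blast
  next
    case False
    define A where "A = take i P"
    define B where "B = P ! i - {1, 2}"
    define C where "C = drop (Suc i) P"
    have ins: "insert 1 (insert 2 B) = P ! i" using i by (auto simp: B_def)
    have eq: "P = A @ [insert 1 (insert 2 B)] @ C" unfolding ins A_def C_def
      using i(1) by (simp add: Cons_nth_drop_Suc)
    have "B \<noteq> {}"
    proof
      assume "B = {}"
      then have Pi: "P ! i = {1, 2}" using ins by auto
      then have "i = 0" using False by simp
      then show False using nP Pi n3 by auto
    qed
    moreover have B2: "\<forall>x\<in>B. x > 2"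
    proof
      fix x assume x: "x \<in> B"
      then have "x \<ge> 1" "x \<noteq> 1" "x \<noteq> 2" using ge1[OF i(1)] by (auto simp: B_def)
      then show "x > 2" by simp
    qed
    moreover have "opw n (A @ [B, {1, 2}] @ C)"
      using split_opw[of n A B C] op eq \<open>B \<noteq> {}\<close> B2 by simp
    ultimately show ?thesis using eq by blast
  qed
qed

lemma MS_case:
  assumes op: "opw n (A @ [B, {1, 2}] @ C)" and B: "B \<noteq> {}" "\<forall>x\<in>B. x > 2" and n3: "n \<ge> 3"
  defines "S \<equiv> A @ [B, {1, 2}] @ C" and "M \<equiv> A @ [insert 1 (insert 2 B)] @ C"
  shows "(S \<in> XS n \<longleftrightarrow> M \<in> XS n) \<and> (SP n S = {} \<longrightarrow> Phi n S = M) \<and>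
    (SP n M = {} \<longrightarrow> Phi n M = S) \<and> SP n S = SP n M \<and> wt M = - wt S"
proof -
  have mp: "opw n M \<and> oddc M = oddc S \<and> wt M = - wt S" using merge_props[OF op B] by (simp add: M_def S_def)
  have "S \<in> XS n \<longleftrightarrow> M \<in> XS n" using mp op first_MS[OF n3, of A B C] by (auto simp: XS_def S_def M_def)
  moreover have "SP n S = {} \<longrightarrow> Phi n S = M" using Phi2_S[OF op B] by (simp add: Phi_def S_def M_def)
  moreover have "SP n M = {} \<longrightarrow> Phi n M = S" using Phi2_M[of n A B C] mp B by (simp add: Phi_def S_def M_def)
  moreover have "SP n S = SP n M" using SP_MS by (simp add: S_def M_def)
  ultimately show ?thesis using mp by simp
qed

lemma tau_image_image: "(`) (tau v) \<circ> (`) (tau v) = id"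
  by (auto simp: fun_eq_iff image_comp)

lemma tog_tau: "tog (map ((`) (tau v)) P) a b \<longleftrightarrow> tog P (tau v a) (tau v b)"
  by (auto simp: tog_def in_transpose_image_iff)

lemma tau_case:
  assumes P: "P \<in> XS n" and sp: "SP n P \<noteq> {}"
  defines "v \<equiv> 2 * Min (SP n P) - 1"
  shows "Phi n P \<in> XS n \<and> Phi n (Phi n P) = P \<and> wt (Phi n P) = - wt P"
proof -
  have op: "opw n P" and od: "oddc P \<le> 1" and nP: "n \<in> P ! 0" using P by (auto simp: XS_def)
  have fin: "finite (SP n P)" unfolding SP_def by (rule finite_subset[of _ "{..n}"]) auto
  define j0 where "j0 = Min (SP n P)"
  have j0: "j0 \<in> SP n P" using fin sp by (simp add: j0_def)
  then have j0p: "1 \<le> j0" "2 * j0 < n" "\<not> tog P (2 * j0 - 1) (2 * j0)" by (auto simp: SP_def)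
  have v: "v = 2 * j0 - 1" "Suc v = 2 * j0" "1 \<le> v" "Suc v \<le> n" using j0p by (auto simp: v_def j0_def)
  have nb: "\<forall>B\<in>set P. \<not> (v \<in> B \<and> Suc v \<in> B)" using j0p(3) v by (auto simp: tog_def)
  define Q where "Q = map ((`) (tau v)) P"
  have tp: "opw n Q \<and> oddc Q = oddc P \<and> wt Q = - wt P" using tau_props[OF op nb v(3,4)] by (simp add: Q_def)
  have "n \<noteq> v" "n \<noteq> Suc v" using v j0p by auto
  then have "tau v n = n" by simp
  moreover have "P \<noteq> []" using opw_ne[OF _ op] v(4) by simp
  ultimately have "n \<in> Q ! 0" using nP by (auto simp: Q_def in_transpose_image_iff)
  then have QX: "Q \<in> XS n" using tp od by (simp add: XS_def)
  have "SP n Q = SP n P"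
  proof -
    have "tog Q (2 * j - 1) (2 * j) = tog P (2 * j - 1) (2 * j)" if "1 \<le> j" for j
    proof (cases "j = j0")
      case True
      then have "tau v (2 * j - 1) = 2 * j" "tau v (2 * j) = 2 * j - 1" using v by auto
      then show ?thesis unfolding Q_def tog_tau by (auto simp: tog_def)
    next
      case False
      then have "2 * j - 1 \<noteq> v" "2 * j - 1 \<noteq> Suc v" "2 * j \<noteq> v" "2 * j \<noteq> Suc v" using v that by auto
      then have "tau v (2 * j - 1) = 2 * j - 1" "tau v (2 * j) = 2 * j" by simp_all
      then show ?thesis unfolding Q_def tog_tau by simp
    qed
    then show ?thesis unfolding SP_def by blast
  qed
  moreover have PhiP: "Phi n P = Q" using sp by (simp add: Phi_def Q_def v_def)
  moreover have "map ((`) (tau v)) Q = P" unfolding Q_def map_map tau_image_image by simp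
  ultimately have "Phi n (Phi n P) = P" using sp by (simp add: Phi_def v_def)
  then show ?thesis using PhiP QX tp by simp
qed

lemma Phi_props:
  assumes P: "P \<in> XS n" and n3: "n \<ge> 3"
  shows "Phi n P \<in> XS n \<and> Phi n (Phi n P) = P \<and> wt (Phi n P) = - wt P"
proof (cases "SP n P = {}")
  case False
  then show ?thesis using tau_case[OF P] by simp
next
  case True
  obtain A B C where ABC: "B \<noteq> {}" "\<forall>x\<in>B. x > 2" "opw n (A @ [B, {1, 2}] @ C)"
    and cs: "P = A @ [B, {1, 2}] @ C \<or> P = A @ [insert 1 (insert 2 B)] @ C"
    using decomp[OF P n3 True] by blast
  note ms = MS_case[OF ABC(3) ABC(1,2) n3]
  from cs show ?thesis
  proof
    assume e: "P = A @ [B, {1, 2}] @ C"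
    then show ?thesis using ms P True by auto
  next
    assume e: "P = A @ [insert 1 (insert 2 B)] @ C"
    then show ?thesis using ms P True by auto
  qed
qed

lemma sum_XS_zero:
  assumes n3: "n \<ge> 3"
  shows "(\<Sum>P\<in>XS n. wt P) = 0"
proof -
  have "(\<Sum>P\<in>XS n. wt P) = (\<Sum>P\<in>XS n. - wt P)"
    by (rule sum.reindex_bij_witness[where i = "Phi n" and j = "Phi n"]) (use Phi_props[OF _ n3] in auto)
  then show ?thesis by (simp add: sum_negf)
qed


theorem mainTheorem9:
  fixes n :: nat and lam :: "nat \<Rightarrow> real"
  assumes "n \<ge> 3"
    and "(\<Sum>i=1..n. lam i) > 0"
    and "Nlam n lam = n"
  shows "(\<Sum>P\<in>P0_ord n lam. (-1) ^ length P * eps P * eps' P) = (0::int)"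
proof -
  have n1: "n \<ge> 1" using assms(1) by simp
  have "(\<Sum>P\<in>P0_ord n lam. (-1) ^ length P * eps P * eps' P) = (\<Sum>P\<in>P0_ord n lam. wt P)"
    by (simp add: wt_def)
  also have "\<dots> = (\<Sum>P\<in>XS n. wt P)" by (rule sum_transfer[OF n1 assms(2,3)])
  also have "\<dots> = 0" by (rule sum_XS_zero[OF assms(1)])
  finally show ?thesis .
qed

end
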